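(* Let $X\in\mathbb{R}^{d_1}$ and $Y\in\mathbb{R}^{d_2}$ be independent zero-mean random vectors that are sub-Gaussian with parameters $\sigma_1^2$ and $\sigma_2^2$, i.e. $\mathbb{E}e^{\langle a,X\rangle}\le e^{\sigma_1^2\|a\|^2/2}$ and $\mathbb{E}e^{\langle b,Y\rangle}\le e^{\sigma_2^2\|b\|^2/2}$ for all $a\in\mathbb{R}^{d_1}$, $b\in\mathbb{R}^{d_2}$. Let $A\in\mathbb{R}^{d_1\times d_2}$, $\sigma^2=\sigma_1\sigma_2\|A\|$ and $d=\min(d_1,d_2)$. Then for all $\lambda$ with $\lambda^2\sigma^4<1$, $$\mathbb{E}\big(e^{\lambda X^TAY}\big)\le\Big(\frac{1}{1-\lambda^2\sigma^4}\Big)^{d/2},$$ and for all $t>0$, $$\mathbb{P}\big(X^TAY/\sigma^2>\sqrt{4dt}+4t\big)\le\exp(-t).$$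
   Context: $\|A\|$ denotes the spectral norm of $A$. *)

theory Defs
  imports "HOL-Analysis.Analysis" "HOL-Probability.Probability"
begin

definition spec_norm :: "real^'m^'n \<Rightarrow> real" where
  "spec_norm A = onorm (\<lambda>v. A *v v)"

text \<open>The library's indep_var requires both variables to share a codomain type, so we
  state the textbook definition directly.\<close>
definition indep_rv :: "'w measure \<Rightarrow> ('w \<Rightarrow> 'a::topological_space) \<Rightarrow> ('w \<Rightarrow> 'b::topological_space) \<Rightarrow> bool" where
  "indep_rv M X Y \<longleftrightarrow>
     (\<forall>S \<in> sets borel. \<forall>T \<in> sets borel.
        measure M {\<omega> \<in> space M. X \<omega> \<in> S \<and> Y \<omega> \<in> T}
          = measure M {\<omega> \<in> space M. X \<omega> \<in> S} * measure M {\<omega> \<in> space M. Y \<omega> \<in> T})"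

end

theory Submission
  imports Defs
begin

lemma gauss_density_eq1:
  assumes "s > 0"
  shows "ennreal (normal_density 0 s x) * ennreal (exp (x * y))
     = ennreal (exp (s\<^sup>2 * y\<^sup>2 / 2)) * ennreal (normal_density (s\<^sup>2 * y) s x)"
proof -
  have "normal_density 0 s x * exp (x * y) = exp (s\<^sup>2 * y\<^sup>2 / 2) * normal_density (s\<^sup>2 * y) s x"
  proof -
    have e: "-(x - 0)\<^sup>2 / (2 * s\<^sup>2) + x * y = s\<^sup>2 * y\<^sup>2 / 2 + -(x - s\<^sup>2 * y)\<^sup>2 / (2 * s\<^sup>2)"
      using assms by (simp add: field_simps power2_eq_square)
    have "exp (-(x - 0)\<^sup>2 / (2 * s\<^sup>2)) * exp (x * y) = exp (s\<^sup>2 * y\<^sup>2 / 2) * exp (-(x - s\<^sup>2 * y)\<^sup>2 / (2 * s\<^sup>2))"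
      by (simp only: exp_add[symmetric] e)
    then show ?thesis unfolding normal_density_def
      by (metis (no_types, lifting) mult.assoc mult.commute)
  qed
  then show ?thesis by (simp add: ennreal_mult[symmetric])
qed

lemma gauss_mgf:
  assumes "s > 0"
  shows "(\<integral>\<^sup>+x. ennreal (exp (x * y)) \<partial>density lborel (normal_density 0 s))
     = ennreal (exp (s\<^sup>2 * y\<^sup>2 / 2))"
proof -
  have "(\<integral>\<^sup>+x. ennreal (exp (x * y)) \<partial>density lborel (normal_density 0 s))
     = (\<integral>\<^sup>+x. ennreal (normal_density 0 s x) * ennreal (exp (x * y)) \<partial>lborel)"
    by (subst nn_integral_density) auto
  also have "\<dots> = (\<integral>\<^sup>+x. ennreal (exp (s\<^sup>2 * y\<^sup>2 / 2)) * ennreal (normal_density (s\<^sup>2 * y) s x) \<partial>lborel)"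
    using gauss_density_eq1[OF assms] by simp
  also have "\<dots> = ennreal (exp (s\<^sup>2 * y\<^sup>2 / 2)) * (\<integral>\<^sup>+x. ennreal (normal_density (s\<^sup>2 * y) s x) \<partial>lborel)"
    by (subst nn_integral_cmult) auto
  also have "(\<integral>\<^sup>+x. ennreal (normal_density (s\<^sup>2 * y) s x) \<partial>lborel) = 1"
  proof -
    interpret prob_space "density lborel (normal_density (s\<^sup>2 * y) s)"
      using prob_space_normal_density assms by blast
    show ?thesis using emeasure_space_1 by (simp add: emeasure_density)
  qed
  finally show ?thesis by simp
qed

lemma gauss_sq:
  assumes "s > 0" "2 * k * s\<^sup>2 < 1"
  shows "(\<integral>\<^sup>+x. ennreal (exp (k * x\<^sup>2)) \<partial>density lborel (normal_density 0 s))
     = ennreal (1 / sqrt (1 - 2 * k * s\<^sup>2))"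
proof -
  define s' where "s' = s / sqrt (1 - 2 * k * s\<^sup>2)"
  have q: "1 - 2 * k * s\<^sup>2 > 0" using assms by simp
  have s'pos: "s' > 0" using assms q by (simp add: s'_def)
  have s'2: "s'\<^sup>2 = s\<^sup>2 / (1 - 2 * k * s\<^sup>2)" using q by (simp add: s'_def power_divide)
  have pt: "normal_density 0 s x * exp (k * x\<^sup>2) = (1 / sqrt (1 - 2 * k * s\<^sup>2)) * normal_density 0 s' x" for x
  proof -
    have e: "-(x - 0)\<^sup>2 / (2 * s\<^sup>2) + k * x\<^sup>2 = -(x - 0)\<^sup>2 / (2 * s'\<^sup>2)"
      using assms q by (simp add: s'2 field_simps)
    have c: "1 / sqrt (2 * pi * s\<^sup>2) = (1 / sqrt (1 - 2 * k * s\<^sup>2)) * (1 / sqrt (2 * pi * s'\<^sup>2))"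
      using assms q s'pos by (simp add: s'2 real_sqrt_divide real_sqrt_mult field_simps)
    have "exp (-(x - 0)\<^sup>2 / (2 * s\<^sup>2)) * exp (k * x\<^sup>2) = exp (-(x - 0)\<^sup>2 / (2 * s'\<^sup>2))"
      by (simp only: exp_add[symmetric] e)
    then show ?thesis unfolding normal_density_def c
      by (metis (no_types, lifting) mult.assoc)
  qed
  have "(\<integral>\<^sup>+x. ennreal (exp (k * x\<^sup>2)) \<partial>density lborel (normal_density 0 s))
     = (\<integral>\<^sup>+x. ennreal (normal_density 0 s x) * ennreal (exp (k * x\<^sup>2)) \<partial>lborel)"
    by (subst nn_integral_density) auto
  also have "\<dots> = (\<integral>\<^sup>+x. ennreal (1 / sqrt (1 - 2 * k * s\<^sup>2)) * ennreal (normal_density 0 s' x) \<partial>lborel)"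
  proof (intro nn_integral_cong)
    fix x
    have "ennreal (normal_density 0 s x) * ennreal (exp (k * x\<^sup>2)) = ennreal (normal_density 0 s x * exp (k * x\<^sup>2))"
      by (simp add: ennreal_mult)
    also have "\<dots> = ennreal (1 / sqrt (1 - 2 * k * s\<^sup>2)) * ennreal (normal_density 0 s' x)"
      unfolding pt by (rule ennreal_mult) (use q in auto)
    finally show "ennreal (normal_density 0 s x) * ennreal (exp (k * x\<^sup>2)) = ennreal (1 / sqrt (1 - 2 * k * s\<^sup>2)) * ennreal (normal_density 0 s' x)" .
  qed
  also have "\<dots> = ennreal (1 / sqrt (1 - 2 * k * s\<^sup>2)) * (\<integral>\<^sup>+x. ennreal (normal_density 0 s' x) \<partial>lborel)"
    by (subst nn_integral_cmult) auto
  also have "(\<integral>\<^sup>+x. ennreal (normal_density 0 s' x) \<partial>lborel) = 1"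
  proof -
    interpret prob_space "density lborel (normal_density 0 s')"
      using prob_space_normal_density s'pos by blast
    show ?thesis using emeasure_space_1 by (simp add: emeasure_density)
  qed
  finally show ?thesis by simp
qed


lemma indep_nn:
  fixes X :: "'w \<Rightarrow> 'a::second_countable_topology" and Y :: "'w \<Rightarrow> 'b::second_countable_topology"
    and f :: "'a \<times> 'b \<Rightarrow> ennreal"
  assumes "prob_space M" and [measurable]: "X \<in> borel_measurable M" "Y \<in> borel_measurable M"
    and ind: "indep_rv M X Y" and [measurable]: "f \<in> borel_measurable borel"
  shows "(\<integral>\<^sup>+\<omega>. f (X \<omega>, Y \<omega>) \<partial>M) = (\<integral>\<^sup>+y. \<integral>\<^sup>+x. f (x, y) \<partial>distr M borel X \<partial>distr M borel Y)"
proof -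
  interpret prob_space M by fact
  interpret PX: prob_space "distr M borel X" by (rule prob_space_distr) simp
  interpret PY: prob_space "distr M borel Y" by (rule prob_space_distr) simp
  interpret P: pair_sigma_finite "distr M borel X" "distr M borel Y" ..
  have sets: "sets (distr M borel X \<Otimes>\<^sub>M distr M borel Y) = sets (borel :: ('a \<times> 'b) measure)"
    by (simp, subst borel_prod, rule refl)
  have eq: "distr M borel X \<Otimes>\<^sub>M distr M borel Y = distr M borel (\<lambda>\<omega>. (X \<omega>, Y \<omega>))"
  proof (rule pair_measure_eqI)
    show "sigma_finite_measure (distr M borel X)" "sigma_finite_measure (distr M borel Y)"
      by unfold_locales
    show "sets (distr M borel X \<Otimes>\<^sub>M distr M borel Y) = sets (distr M borel (\<lambda>\<omega>. (X \<omega>, Y \<omega>)))"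
      using sets by simp
    fix A B assume A: "A \<in> sets (distr M borel X)" and B: "B \<in> sets (distr M borel Y)"
    then have A': "A \<in> sets borel" and B': "B \<in> sets borel" by auto
    have "emeasure (distr M borel (\<lambda>\<omega>. (X \<omega>, Y \<omega>))) (A \<times> B)
        = emeasure M ((\<lambda>\<omega>. (X \<omega>, Y \<omega>)) -` (A \<times> B) \<inter> space M)"
      using A' B' by (subst emeasure_distr) (auto simp: borel_prod[symmetric])
    also have "(\<lambda>\<omega>. (X \<omega>, Y \<omega>)) -` (A \<times> B) \<inter> space M = {\<omega> \<in> space M. X \<omega> \<in> A \<and> Y \<omega> \<in> B}"
      by auto
    also have "emeasure M {\<omega> \<in> space M. X \<omega> \<in> A \<and> Y \<omega> \<in> B}
       = ennreal (measure M {\<omega> \<in> space M. X \<omega> \<in> A} * measure M {\<omega> \<in> space M. Y \<omega> \<in> B})"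
      using ind A' B' unfolding indep_rv_def by (simp add: emeasure_eq_measure)
    also have "\<dots> = emeasure M {\<omega> \<in> space M. X \<omega> \<in> A} * emeasure M {\<omega> \<in> space M. Y \<omega> \<in> B}"
      by (simp add: emeasure_eq_measure ennreal_mult)
    also have "\<dots> = emeasure (distr M borel X) A * emeasure (distr M borel Y) B"
      using A' B' by (simp add: emeasure_distr vimage_def Int_def conj_commute)
    finally show "emeasure (distr M borel X) A * emeasure (distr M borel Y) B
        = emeasure (distr M borel (\<lambda>\<omega>. (X \<omega>, Y \<omega>))) (A \<times> B)" by simp
  qed
  have fm: "f \<in> borel_measurable (distr M borel X \<Otimes>\<^sub>M distr M borel Y)"
    by (subst measurable_cong_sets[OF sets refl]) (rule assms(5))
  have "(\<integral>\<^sup>+\<omega>. f (X \<omega>, Y \<omega>) \<partial>M) = (\<integral>\<^sup>+z. f z \<partial>distr M borel (\<lambda>\<omega>. (X \<omega>, Y \<omega>)))"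
    by (subst nn_integral_distr) (auto simp: borel_prod)
  also have "\<dots> = integral\<^sup>N (distr M borel X \<Otimes>\<^sub>M distr M borel Y) f"
    by (simp add: eq)
  also have "\<dots> = (\<integral>\<^sup>+y. \<integral>\<^sup>+x. f (x, y) \<partial>distr M borel X \<partial>distr M borel Y)"
    by (rule P.nn_integral_snd[OF fm, symmetric])
  finally show ?thesis .
qed


lemma vec_nth_meas[measurable]: "(\<lambda>x::real^'n. x $ i) \<in> borel_measurable borel"
  by (intro borel_measurable_continuous_onI continuous_intros)

lemma norm_sq_vec: "(norm (y::real^'n))\<^sup>2 = (\<Sum>i\<in>UNIV. (y $ i)\<^sup>2)"
  by (simp add: norm_vec_def L2_set_def sum_nonneg)

lemma subg_sq:
  fixes M :: "'w measure" and Y :: "'w \<Rightarrow> real^'b"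
  assumes "prob_space M" and Ym[measurable]: "Y \<in> borel_measurable M"
    and "\<sigma>2 \<ge> 0"
    and subY: "\<And>b. (\<integral>\<^sup>+ \<omega>. ennreal (exp (b \<bullet> Y \<omega>)) \<partial>M) \<le> ennreal (exp (\<sigma>2\<^sup>2 * (norm b)\<^sup>2 / 2))"
    and c: "c > 0" "2 * c * \<sigma>2\<^sup>2 < 1"
  shows "(\<integral>\<^sup>+\<omega>. ennreal (exp (c * (norm (Y \<omega>))\<^sup>2)) \<partial>M)
      \<le> ennreal ((1 / (1 - 2 * c * \<sigma>2\<^sup>2)) powr (real CARD('b) / 2))"
proof -
  interpret prob_space M by fact
  define s where "s = sqrt (2 * c)"
  have s: "s > 0" "s\<^sup>2 = 2 * c" using c by (auto simp: s_def)
  define N where "N = density lborel (normal_density 0 s)"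
  interpret N: prob_space N unfolding N_def using prob_space_normal_density s by blast
  define P where "P = Pi\<^sub>M (UNIV :: 'b set) (\<lambda>_. N)"
  interpret PP: product_prob_space "\<lambda>_::'b. N" UNIV
    by unfold_locales
  interpret P: prob_space P unfolding P_def by (rule prob_space_PiM) (auto intro: N.prob_space_axioms)
  interpret MP: pair_sigma_finite M P by unfold_locales
  have Nm: "sets N = sets borel" by (simp add: N_def)
  have pt: "ennreal (exp (c * (norm y)\<^sup>2)) = (\<integral>\<^sup>+x. ennreal (exp (\<Sum>i\<in>UNIV. x i * y $ i)) \<partial>P)" for y :: "real^'b"
  proof -
    have "ennreal (exp (c * (norm y)\<^sup>2)) = ennreal (\<Prod>i\<in>UNIV. exp (s\<^sup>2 * (y $ i)\<^sup>2 / 2))"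
      by (simp add: norm_sq_vec exp_sum s sum_distrib_left)
    also have "\<dots> = (\<Prod>i\<in>UNIV. ennreal (exp (s\<^sup>2 * (y $ i)\<^sup>2 / 2)))"
      by (simp add: prod_ennreal)
    also have "\<dots> = (\<Prod>i\<in>UNIV. \<integral>\<^sup>+t. ennreal (exp (t * y $ i)) \<partial>N)"
      using gauss_mgf[OF s(1)] by (simp add: N_def)
    also have "\<dots> = (\<integral>\<^sup>+x. (\<Prod>i\<in>UNIV. ennreal (exp (x i * y $ i))) \<partial>P)"
      unfolding P_def by (rule PP.product_nn_integral_prod[symmetric]) (auto simp: N_def)
    also have "\<dots> = (\<integral>\<^sup>+x. ennreal (exp (\<Sum>i\<in>UNIV. x i * y $ i)) \<partial>P)"
      by (simp add: prod_ennreal exp_sum)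
    finally show ?thesis .
  qed
  have "(\<integral>\<^sup>+\<omega>. ennreal (exp (c * (norm (Y \<omega>))\<^sup>2)) \<partial>M)
      = (\<integral>\<^sup>+\<omega>. \<integral>\<^sup>+x. ennreal (exp (\<Sum>i\<in>UNIV. x i * Y \<omega> $ i)) \<partial>P \<partial>M)"
    by (simp add: pt)
  also have "\<dots> = (\<integral>\<^sup>+x. \<integral>\<^sup>+\<omega>. ennreal (exp (\<Sum>i\<in>UNIV. x i * Y \<omega> $ i)) \<partial>M \<partial>P)"
  proof (rule MP.Fubini'[symmetric])
    show "(\<lambda>(\<omega>, x). ennreal (exp (\<Sum>i\<in>UNIV. x i * Y \<omega> $ i))) \<in> borel_measurable (M \<Otimes>\<^sub>M P)"
    proof -
      have "sets (M \<Otimes>\<^sub>M P) = sets (M \<Otimes>\<^sub>M Pi\<^sub>M (UNIV :: 'b set) (\<lambda>_. borel))"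
        unfolding P_def by (intro sets_pair_measure_cong refl sets_PiM_cong) (auto simp: N_def)
      moreover have "(\<lambda>(\<omega>, x). ennreal (exp (\<Sum>i\<in>UNIV. x i * Y \<omega> $ i))) \<in> borel_measurable (M \<Otimes>\<^sub>M Pi\<^sub>M (UNIV :: 'b set) (\<lambda>_. borel))"
        by measurable
      ultimately show ?thesis using measurable_cong_sets by blast
    qed
  qed
  also have "\<dots> \<le> (\<integral>\<^sup>+x. ennreal (\<Prod>i\<in>UNIV. exp (\<sigma>2\<^sup>2 / 2 * (x i)\<^sup>2)) \<partial>P)"
  proof (rule nn_integral_mono)
    fix x :: "'b \<Rightarrow> real"
    have "(\<integral>\<^sup>+\<omega>. ennreal (exp (\<Sum>i\<in>UNIV. x i * Y \<omega> $ i)) \<partial>M) = (\<integral>\<^sup>+\<omega>. ennreal (exp ((\<chi> i. x i) \<bullet> Y \<omega>)) \<partial>M)"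
      by (simp add: inner_vec_def)
    also have "\<dots> \<le> ennreal (exp (\<sigma>2\<^sup>2 * (norm (\<chi> i. x i))\<^sup>2 / 2))"
      by (rule subY)
    also have "\<dots> = ennreal (\<Prod>i\<in>UNIV. exp (\<sigma>2\<^sup>2 / 2 * (x i)\<^sup>2))"
      by (simp add: norm_sq_vec exp_sum sum_distrib_left sum_divide_distrib)
    finally show "(\<integral>\<^sup>+\<omega>. ennreal (exp (\<Sum>i\<in>UNIV. x i * Y \<omega> $ i)) \<partial>M) \<le> ennreal (\<Prod>i\<in>UNIV. exp (\<sigma>2\<^sup>2 / 2 * (x i)\<^sup>2))" .
  qed
  also have "\<dots> = (\<integral>\<^sup>+x. (\<Prod>i\<in>UNIV. ennreal (exp (\<sigma>2\<^sup>2 / 2 * (x i)\<^sup>2))) \<partial>P)"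
    by (simp add: prod_ennreal)
  also have "\<dots> = (\<Prod>i\<in>(UNIV::'b set). \<integral>\<^sup>+t. ennreal (exp (\<sigma>2\<^sup>2 / 2 * t\<^sup>2)) \<partial>N)"
    unfolding P_def by (rule PP.product_nn_integral_prod) (auto simp: N_def)
  also have "\<dots> = (\<Prod>i\<in>(UNIV::'b set). ennreal (1 / sqrt (1 - 2 * c * \<sigma>2\<^sup>2)))"
  proof -
    have eqk: "1 - 2 * (\<sigma>2\<^sup>2 / 2) * s\<^sup>2 = 1 - 2 * c * \<sigma>2\<^sup>2" using s by simp
    have k: "2 * (\<sigma>2\<^sup>2 / 2) * s\<^sup>2 < 1" using s c by (simp add: mult.commute)
    have "(\<integral>\<^sup>+t. ennreal (exp (\<sigma>2\<^sup>2 / 2 * t\<^sup>2)) \<partial>N) = ennreal (1 / sqrt (1 - 2 * c * \<sigma>2\<^sup>2))"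
      using gauss_sq[OF s(1) k] unfolding eqk N_def .
    then show ?thesis by simp
  qed
  also have "\<dots> = ennreal ((1 / sqrt (1 - 2 * c * \<sigma>2\<^sup>2)) ^ CARD('b))"
    by (simp, rule ennreal_power) (use c in simp)
  also have "(1 / sqrt (1 - 2 * c * \<sigma>2\<^sup>2)) ^ CARD('b) = (1 / (1 - 2 * c * \<sigma>2\<^sup>2)) powr (real CARD('b) / 2)"
  proof -
    have a: "1 - 2 * c * \<sigma>2\<^sup>2 > 0" using c by simp
    have "(1 / sqrt (1 - 2 * c * \<sigma>2\<^sup>2)) = (1 / (1 - 2 * c * \<sigma>2\<^sup>2)) powr (1/2)"
      using a by (simp add: powr_half_sqrt real_sqrt_divide)
    then show ?thesis using a by (simp add: powr_realpow[symmetric] powr_powr)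
  qed
  finally show ?thesis .
qed


lemma mv_cont[continuous_intros]:
  "continuous_on S f \<Longrightarrow> continuous_on S (\<lambda>x. (B::real^'n^'m) *v f x)"
  using bounded_linear.continuous_on[OF matrix_vector_mul_bounded_linear[of B]] by blast

lemma mv_meas[measurable]: "(\<lambda>x::real^'n. (B::real^'n^'m) *v x) \<in> borel_measurable borel"
  by (intro borel_measurable_continuous_onI continuous_intros)

lemma core:
  fixes M :: "'w measure" and X :: "'w \<Rightarrow> real^'a" and Y :: "'w \<Rightarrow> real^'b"
    and B :: "real^'b^'a"
  assumes "prob_space M" and Xm[measurable]: "X \<in> borel_measurable M" and Ym[measurable]: "Y \<in> borel_measurable M"
    and ind: "indep_rv M X Y"
    and s1: "\<sigma>1 \<ge> 0" and s2: "\<sigma>2 \<ge> 0"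
    and subX: "\<And>a. (\<integral>\<^sup>+ \<omega>. ennreal (exp (a \<bullet> X \<omega>)) \<partial>M) \<le> ennreal (exp (\<sigma>1\<^sup>2 * (norm a)\<^sup>2 / 2))"
    and subY: "\<And>b. (\<integral>\<^sup>+ \<omega>. ennreal (exp (b \<bullet> Y \<omega>)) \<partial>M) \<le> ennreal (exp (\<sigma>2\<^sup>2 * (norm b)\<^sup>2 / 2))"
    and K: "K \<ge> 0" and nB: "\<And>y. norm (B *v y) \<le> K * norm y"
    and q: "l\<^sup>2 * (\<sigma>1 * \<sigma>2 * K)\<^sup>2 < 1"
  shows "(\<integral>\<^sup>+\<omega>. ennreal (exp (l * (X \<omega> \<bullet> (B *v Y \<omega>)))) \<partial>M)
     \<le> ennreal ((1 / (1 - l\<^sup>2 * (\<sigma>1 * \<sigma>2 * K)\<^sup>2)) powr (real CARD('b) / 2))"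
proof -
  interpret prob_space M by fact
  define c where "c = \<sigma>1\<^sup>2 * l\<^sup>2 * K\<^sup>2 / 2"
  have c0: "c \<ge> 0" by (simp add: c_def)
  have qc: "l\<^sup>2 * (\<sigma>1 * \<sigma>2 * K)\<^sup>2 = 2 * c * \<sigma>2\<^sup>2" by (simp add: c_def power_mult_distrib)
  let ?PX = "distr M borel X" and ?PY = "distr M borel Y"
  have "(\<integral>\<^sup>+\<omega>. ennreal (exp (l * (X \<omega> \<bullet> (B *v Y \<omega>)))) \<partial>M)
      = (\<integral>\<^sup>+\<omega>. (\<lambda>z. ennreal (exp (l * (fst z \<bullet> (B *v snd z))))) (X \<omega>, Y \<omega>) \<partial>M)"
    by simp
  also have "\<dots> = (\<integral>\<^sup>+y. \<integral>\<^sup>+x. ennreal (exp (l * (x \<bullet> (B *v y)))) \<partial>?PX \<partial>?PY)"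
    by (subst indep_nn[OF assms(1) Xm Ym ind]) (auto intro!: borel_measurable_continuous_onI continuous_intros)
  also have "\<dots> \<le> (\<integral>\<^sup>+y. ennreal (exp (c * (norm y)\<^sup>2)) \<partial>?PY)"
  proof (rule nn_integral_mono)
    fix y :: "real^'b"
    have "(\<integral>\<^sup>+x. ennreal (exp (l * (x \<bullet> (B *v y)))) \<partial>?PX) = (\<integral>\<^sup>+\<omega>. ennreal (exp ((l *\<^sub>R (B *v y)) \<bullet> X \<omega>)) \<partial>M)"
      by (subst nn_integral_distr) (auto simp: inner_commute)
    also have "\<dots> \<le> ennreal (exp (\<sigma>1\<^sup>2 * (norm (l *\<^sub>R (B *v y)))\<^sup>2 / 2))"
      by (rule subX)
    also have "\<dots> \<le> ennreal (exp (c * (norm y)\<^sup>2))"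
    proof -
      have "norm (l *\<^sub>R (B *v y)) \<le> \<bar>l\<bar> * (K * norm y)"
        using nB[of y] by (simp add: mult_left_mono)
      then have "(norm (l *\<^sub>R (B *v y)))\<^sup>2 \<le> (\<bar>l\<bar> * (K * norm y))\<^sup>2"
        by (intro power_mono) auto
      then have "\<sigma>1\<^sup>2 * (norm (l *\<^sub>R (B *v y)))\<^sup>2 / 2 \<le> \<sigma>1\<^sup>2 * (\<bar>l\<bar> * (K * norm y))\<^sup>2 / 2"
        by (intro divide_right_mono mult_left_mono) auto
      also have "\<dots> = c * (norm y)\<^sup>2" by (simp add: c_def power_mult_distrib)
      finally show ?thesis by (intro ennreal_leI) simp
    qed
    finally show "(\<integral>\<^sup>+x. ennreal (exp (l * (x \<bullet> (B *v y)))) \<partial>?PX) \<le> ennreal (exp (c * (norm y)\<^sup>2))" .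
  qed
  also have "\<dots> = (\<integral>\<^sup>+\<omega>. ennreal (exp (c * (norm (Y \<omega>))\<^sup>2)) \<partial>M)"
    by (subst nn_integral_distr) auto
  also have "\<dots> \<le> ennreal ((1 / (1 - l\<^sup>2 * (\<sigma>1 * \<sigma>2 * K)\<^sup>2)) powr (real CARD('b) / 2))"
  proof (cases "c = 0")
    case True
    have "(\<integral>\<^sup>+\<omega>. ennreal (exp (c * (norm (Y \<omega>))\<^sup>2)) \<partial>M) = 1"
      using True by (simp add: emeasure_space_1)
    also have "\<dots> \<le> ennreal ((1 / (1 - l\<^sup>2 * (\<sigma>1 * \<sigma>2 * K)\<^sup>2)) powr (real CARD('b) / 2))"
    proof -
      have "1 \<le> (1 / (1 - l\<^sup>2 * (\<sigma>1 * \<sigma>2 * K)\<^sup>2))" using q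
        by (simp add: field_simps)
      then have "1 \<le> (1 / (1 - l\<^sup>2 * (\<sigma>1 * \<sigma>2 * K)\<^sup>2)) powr (real CARD('b) / 2)"
        by (intro ge_one_powr_ge_zero) auto
      then show ?thesis by simp
    qed
    finally show ?thesis .
  next
    case False
    then have "c > 0" using c0 by simp
    then show ?thesis unfolding qc
      using subg_sq[OF assms(1) Ym s2 subY] q qc by simp
  qed
  finally show ?thesis .
qed


lemma dd2: "(b::real) \<noteq> 0 \<Longrightarrow> w \<noteq> 0 \<Longrightarrow> x/(b*w)*(b\<^sup>2/2) = x*b/(2*w)"
  by (simp add: field_simps power2_eq_square)

lemma tail_real:
  fixes t d :: real
  assumes t: "t > 0" and d: "d \<ge> 1"
  defines "\<mu> \<equiv> sqrt t / (sqrt t + sqrt d)"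
  shows "\<mu> \<ge> 0" "\<mu>\<^sup>2 < 1"
    "(1 / (1 - \<mu>\<^sup>2)) powr (d / 2) * exp (- (\<mu> * (sqrt (4 * d * t) + 4 * t))) \<le> exp (- t)"
proof -
  define a where "a = sqrt t"
  define b where "b = sqrt d"
  have a: "a > 0" "a\<^sup>2 = t" using t by (auto simp: a_def)
  have b: "b \<ge> 1" "b\<^sup>2 = d" using d by (auto simp: b_def)
  have mu: "\<mu> = a / (a + b)" by (simp add: \<mu>_def a_def b_def)
  show "\<mu> \<ge> 0" using a(1) b(1) by (simp add: mu)
  have mu1: "\<mu> < 1" using a(1) b(1) by (simp add: mu field_simps)
  show "\<mu>\<^sup>2 < 1" using mu1 \<open>\<mu> \<ge> 0\<close> by (simp add: power_less_one_iff abs_square_less_1)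
  have om: "1 - \<mu>\<^sup>2 = b * (2 * a + b) / (a + b)\<^sup>2"
  proof -
    have h: "(a+b)\<^sup>2 \<noteq> 0" using a(1) b(1) by simp
    have "1 - (a/(a+b))\<^sup>2 = ((a+b)\<^sup>2 - a\<^sup>2) / (a+b)\<^sup>2" using h by (simp add: power_divide diff_divide_distrib)
    also have "(a+b)\<^sup>2 - a\<^sup>2 = b * (2 * a + b)" by (simp add: power2_eq_square algebra_simps)
    finally show ?thesis by (simp add: mu)
  qed
  define y where "y = \<mu>\<^sup>2 / (1 - \<mu>\<^sup>2)"
  have y: "y = a\<^sup>2 / (b * (2 * a + b))"
  proof -
    have mu2: "\<mu>\<^sup>2 = a\<^sup>2 / (a + b)\<^sup>2" by (simp add: mu power_divide)
    have h: "(a+b)\<^sup>2 \<noteq> 0" using a(1) b(1) by simp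
    have dd: "(x/z)/(w/z) = x/w" if "(z::real) \<noteq> 0" for x z w using that by simp
    show ?thesis unfolding y_def by (subst om, subst mu2, rule dd[OF h])
  qed
  have y0: "y \<ge> 0" using a(1) b(1) by (simp add: y)
  have "1 / (1 - \<mu>\<^sup>2) = 1 + y"
    using \<open>\<mu>\<^sup>2 < 1\<close> by (simp add: y_def field_simps)
  then have "(1 / (1 - \<mu>\<^sup>2)) powr (d / 2) = (1 + y) powr (d / 2)" by simp
  also have "\<dots> \<le> (exp y) powr (d / 2)"
    using y0 d by (intro powr_mono2) (auto simp: exp_ge_add_one_self add.commute)
  also have "\<dots> = exp (y * (d / 2))" by (simp add: exp_powr_real)
  finally have P: "(1 / (1 - \<mu>\<^sup>2)) powr (d / 2) \<le> exp (y * (d / 2))" .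
  have s4: "sqrt (4 * d * t) = 2 * a * b"
    by (simp add: a_def b_def real_sqrt_mult)
  have e1: "y * (d / 2) \<le> a\<^sup>2 / 2"
  proof -
    have "y * (d / 2) = a\<^sup>2 * b / (2 * (2 * a + b))"
      unfolding y b(2)[symmetric] by (rule dd2) (use a(1) b(1) in auto)
    also have "\<dots> \<le> a\<^sup>2 / 2"
      using a(1) b(1) by (simp add: field_simps)
    finally show ?thesis .
  qed
  have u: "sqrt (4 * d * t) + 4 * t = 2 * a * b + 4 * a\<^sup>2" using s4 a(2) by simp
  have e2: "\<mu> * (sqrt (4 * d * t) + 4 * t) \<ge> 2 * a\<^sup>2"
  proof -
    have "\<mu> * (sqrt (4 * d * t) + 4 * t) = 2 * a\<^sup>2 * (b + 2 * a) / (a + b)"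
      unfolding u mu
      by (simp only: times_divide_eq_left) (simp add: power2_eq_square algebra_simps)
    also have "\<dots> \<ge> 2 * a\<^sup>2"
      using a(1) b(1) by (simp add: field_simps)
    finally show ?thesis .
  qed
  have "(1 / (1 - \<mu>\<^sup>2)) powr (d / 2) * exp (- (\<mu> * (sqrt (4 * d * t) + 4 * t)))
     \<le> exp (y * (d / 2)) * exp (- (\<mu> * (sqrt (4 * d * t) + 4 * t)))"
    by (intro mult_right_mono P) auto
  also have "\<dots> = exp (y * (d / 2) - \<mu> * (sqrt (4 * d * t) + 4 * t))"
    by (simp only: diff_conv_add_uminus exp_add)
  also have "\<dots> \<le> exp (- t)"
  proof -
    have lin: "A - B \<le> - t" if "A \<le> s / 2" "2 * s \<le> B" "s = t" "s > 0" for A B s :: real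
      using that by linarith
    have "a\<^sup>2 > 0" using a(1) by simp
    from lin[OF e1 e2 a(2) this] show ?thesis by simp
  qed
  finally show "(1 / (1 - \<mu>\<^sup>2)) powr (d / 2) * exp (- (\<mu> * (sqrt (4 * d * t) + 4 * t))) \<le> exp (- t)" .
qed


lemma transpose_bound:
  fixes A :: "real^'n^'m"
  assumes nA: "\<And>y. norm (A *v y) \<le> K * norm y" and K0: "K \<ge> 0"
  shows "norm (transpose A *v x) \<le> K * norm x"
proof -
  define v where "v = transpose A *v x"
  have "(norm v)\<^sup>2 = v \<bullet> v" by (simp add: power2_norm_eq_inner)
  also have "\<dots> = x \<bullet> (A *v v)" unfolding v_def
    by (metis dot_lmul_matrix transpose_matrix_vector)
  also have "\<dots> \<le> norm x * norm (A *v v)" by (rule norm_cauchy_schwarz)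
  also have "\<dots> \<le> norm x * (K * norm v)" by (intro mult_left_mono nA) auto
  finally have h: "(norm v)\<^sup>2 \<le> K * norm x * norm v" by (simp add: mult_ac)
  show ?thesis
  proof (cases "norm v = 0")
    case True
    then show ?thesis unfolding v_def[symmetric] using True K0 by simp
  next
    case False
    then have "norm v > 0" by simp
    with h show ?thesis unfolding v_def[symmetric]
      by (simp add: power2_eq_square mult_le_cancel_right_pos)
  qed
qed

theorem lemma4:
  fixes M :: "'w measure"
    and X :: "'w \<Rightarrow> real^'d1" and Y :: "'w \<Rightarrow> real^'d2"
    and A :: "real^'d2^'d1"
    and \<sigma>1 \<sigma>2 :: real
  assumes "prob_space M"
    and "X \<in> borel_measurable M" and "Y \<in> borel_measurable M"
    and "indep_rv M X Y"
    and "integrable M X" and "integral\<^sup>L M X = 0"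
    and "integrable M Y" and "integral\<^sup>L M Y = 0"
    and "\<sigma>1 \<ge> 0" and "\<sigma>2 \<ge> 0"
    and "\<And>a. (\<integral>\<^sup>+ \<omega>. ennreal (exp (a \<bullet> X \<omega>)) \<partial>M) \<le> ennreal (exp (\<sigma>1\<^sup>2 * (norm a)\<^sup>2 / 2))"
    and "\<And>b. (\<integral>\<^sup>+ \<omega>. ennreal (exp (b \<bullet> Y \<omega>)) \<partial>M) \<le> ennreal (exp (\<sigma>2\<^sup>2 * (norm b)\<^sup>2 / 2))"
  defines "\<sigma>sq \<equiv> \<sigma>1 * \<sigma>2 * spec_norm A"
    and "d \<equiv> min CARD('d1) CARD('d2)"
  shows "(\<forall>l::real. l\<^sup>2 * \<sigma>sq\<^sup>2 < 1 \<longrightarrow>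
           (\<integral>\<^sup>+ \<omega>. ennreal (exp (l * (X \<omega> \<bullet> (A *v Y \<omega>)))) \<partial>M)
             \<le> ennreal ((1 / (1 - l\<^sup>2 * \<sigma>sq\<^sup>2)) powr (real d / 2)))
       \<and> (\<forall>t::real. t > 0 \<longrightarrow>
           measure M {\<omega> \<in> space M. X \<omega> \<bullet> (A *v Y \<omega>) / \<sigma>sq > sqrt (4 * real d * t) + 4 * t}
             \<le> exp (- t))"
proof -
  interpret prob_space M by fact
  note Xm[measurable] = assms(2) and Ym[measurable] = assms(3)
  define K where "K = spec_norm A"
  have bl: "bounded_linear (\<lambda>v. A *v v)" by simp
  have K0: "K \<ge> 0" unfolding K_def spec_norm_def by (rule onorm_pos_le[OF bl])
  have nA: "norm (A *v y) \<le> K * norm y" for y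
    unfolding K_def spec_norm_def using onorm[OF bl] by blast
  have nAt: "norm (transpose A *v x) \<le> K * norm x" for x
    by (rule transpose_bound[OF nA K0])
  have swap: "X \<omega> \<bullet> (A *v Y \<omega>) = Y \<omega> \<bullet> (transpose A *v X \<omega>)" for \<omega>
    by (metis dot_lmul_matrix transpose_matrix_vector inner_commute)
  have indYX: "indep_rv M Y X" using assms(4) unfolding indep_rv_def
    by (simp add: conj_commute mult.commute)
  have sq: "\<sigma>sq = \<sigma>1 * \<sigma>2 * K" by (simp add: \<sigma>sq_def K_def)
  have mgf: "(\<integral>\<^sup>+ \<omega>. ennreal (exp (l * (X \<omega> \<bullet> (A *v Y \<omega>)))) \<partial>M)
             \<le> ennreal ((1 / (1 - l\<^sup>2 * \<sigma>sq\<^sup>2)) powr (real d / 2))" if l: "l\<^sup>2 * \<sigma>sq\<^sup>2 < 1" for l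
  proof (cases "CARD('d2) \<le> CARD('d1)")
    case True
    then have "d = CARD('d2)" by (simp add: d_def)
    then show ?thesis
      using core[OF assms(1) Xm Ym assms(4) assms(9) assms(10) assms(11) assms(12) K0 nA, of l] l
      by (simp add: sq)
  next
    case False
    then have "d = CARD('d1)" by (simp add: d_def)
    moreover have "\<sigma>2 * \<sigma>1 * K = \<sigma>sq" by (simp add: sq)
    ultimately show ?thesis
      using core[OF assms(1) Ym Xm indYX assms(10) assms(9) assms(12) assms(11) K0 nAt, of l] l
      by (simp add: swap)
  qed
  have tail: "measure M {\<omega> \<in> space M. X \<omega> \<bullet> (A *v Y \<omega>) / \<sigma>sq > sqrt (4 * real d * t) + 4 * t} \<le> exp (- t)"
    if t: "t > 0" for t
  proof (cases "\<sigma>sq = 0")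
    case True
    have "{\<omega> \<in> space M. X \<omega> \<bullet> (A *v Y \<omega>) / \<sigma>sq > sqrt (4 * real d * t) + 4 * t} = {}"
    proof -
      have "sqrt (4 * real d * t) \<ge> 0" using t by simp
      then have "\<not> (0 > sqrt (4 * real d * t) + 4 * t)" using t by linarith
      then show ?thesis by (simp add: True)
    qed
    then show ?thesis by (metis measure_empty exp_ge_zero)
  next
    case False
    have "\<sigma>sq \<ge> 0" using assms(9,10) K0 by (simp add: sq)
    with False have sp: "\<sigma>sq > 0" by simp
    have d1: "real d \<ge> 1" by (simp add: d_def)
    define \<mu> where "\<mu> = sqrt t / (sqrt t + sqrt (real d))"
    define u where "u = sqrt (4 * real d * t) + 4 * t"
    note TR = tail_real[OF t d1, folded \<mu>_def]
    define l where "l = \<mu> / \<sigma>sq"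
    have l0: "l \<ge> 0" using TR(1) sp by (simp add: l_def)
    have lq: "l\<^sup>2 * \<sigma>sq\<^sup>2 = \<mu>\<^sup>2" using sp by (simp add: l_def power_divide)
    define S where "S = {\<omega> \<in> space M. X \<omega> \<bullet> (A *v Y \<omega>) / \<sigma>sq > u}"
    have Sm: "S \<in> sets M" unfolding S_def by measurable
    have "emeasure M S = (\<integral>\<^sup>+\<omega>. indicator S \<omega> \<partial>M)"
      using Sm by simp
    also have "\<dots> \<le> (\<integral>\<^sup>+\<omega>. ennreal (exp (l * (X \<omega> \<bullet> (A *v Y \<omega>)))) * ennreal (exp (- (\<mu> * u))) \<partial>M)"
    proof (rule nn_integral_mono)
      fix \<omega>
      show "indicator S \<omega> \<le> ennreal (exp (l * (X \<omega> \<bullet> (A *v Y \<omega>)))) * ennreal (exp (- (\<mu> * u)))"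
      proof (cases "\<omega> \<in> S")
        case True
        then have "X \<omega> \<bullet> (A *v Y \<omega>) / \<sigma>sq > u" by (simp add: S_def)
        then have "\<mu> * u \<le> \<mu> * (X \<omega> \<bullet> (A *v Y \<omega>) / \<sigma>sq)"
          using TR(1) by (intro mult_left_mono) auto
        also have "\<dots> = l * (X \<omega> \<bullet> (A *v Y \<omega>))" by (simp add: l_def)
        finally have "0 \<le> l * (X \<omega> \<bullet> (A *v Y \<omega>)) + - (\<mu> * u)" by linarith
        then have "1 \<le> exp (l * (X \<omega> \<bullet> (A *v Y \<omega>)) + - (\<mu> * u))" by simp
        then have "1 \<le> exp (l * (X \<omega> \<bullet> (A *v Y \<omega>))) * exp (- (\<mu> * u))" by (simp only: exp_add)
        then show ?thesis using True by (simp add: ennreal_mult[symmetric])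
      qed simp
    qed
    also have "\<dots> = (\<integral>\<^sup>+\<omega>. ennreal (exp (l * (X \<omega> \<bullet> (A *v Y \<omega>)))) \<partial>M) * ennreal (exp (- (\<mu> * u)))"
      by (rule nn_integral_multc) measurable
    also have "\<dots> \<le> ennreal ((1 / (1 - l\<^sup>2 * \<sigma>sq\<^sup>2)) powr (real d / 2)) * ennreal (exp (- (\<mu> * u)))"
      using TR(2) lq by (intro mult_right_mono mgf) auto
    also have "\<dots> = ennreal ((1 / (1 - \<mu>\<^sup>2)) powr (real d / 2) * exp (- (\<mu> * u)))"
      by (simp add: lq ennreal_mult)
    also have "\<dots> \<le> ennreal (exp (- t))"
      using TR(3) by (simp add: u_def)
    finally have "emeasure M S \<le> ennreal (exp (- t))" .
    then have "measure M S \<le> exp (- t)"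
      by (simp add: emeasure_eq_measure)
    then show ?thesis by (simp add: S_def u_def)
  qed
  show ?thesis using mgf tail by blast
qed


end
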